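(* Let $\mathcal{X}\subset\mathbb{R}^D$, let $\mathcal{D}$ be a probability distribution on $\mathcal{X}$, and let $\mathcal{S}=\{\mathbf{x}_1,\dots,\mathbf{x}_n\}$ consist of $n$ i.i.d. samples from $\mathcal{D}$. Let $N_\phi,N_\theta$ be positive integers and let $\ell:\mathbb{R}^{N_\phi}\times\mathbb{R}^{N_\theta}\times\mathcal{X}\to[0,1]$ be a measurable loss. Define $R(\phi,\theta)=\mathbb{E}_{\mathbf{x}\sim\mathcal{D}}[\ell(\phi,\theta,\mathbf{x})]$ and $\widehat{R}_{\mathcal{S}}(\phi,\theta)=\frac1n\sum_{i=1}^n\ell(\phi,\theta,\mathbf{x}_i)$. Let $\delta\in(0,1)$, fix $\phi^0\in\mathbb{R}^{N_\phi}$, $\theta^0\in\mathbb{R}^{N_\theta}$ and $\sigma_\phi^2>0$, $\sigma_\theta^2>0$ (all chosen independently of $\mathcal{S}$). Then with probability at least $1-\delta$ over $\mathcal{S}\sim\mathcal{D}^n$, simultaneously for all $\phi\in\mathbb{R}^{N_\phi}$, $\theta\in\mathbb{R}^{N_\theta}$, $s_\phi^2>0$, $s_\theta^2>0$, \begin{align*} \mathbb{E}_{\tilde\phi\sim\mathcal{N}(\phi,s^2_\phi I),\,\tilde\theta\sim\mathcal{N}(\theta,s^2_\theta I)}[R(\tilde\phi,\tilde\theta)] &\leq \mathbb{E}_{\tilde\phi\sim\mathcal{N}(\phi,s^2_\phi I),\,\tilde\theta\sim\mathcal{N}(\theta,s^2_\theta I)}[\widehat{R}_{\mathcal{S}}(\tilde\phi,\tilde\theta)]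 \\ &\quad + \sqrt{\frac{\|\phi-\phi^0\|_2^2}{4\sigma^2_\phi n} +\frac{N_\phi\left(\frac{s^2_\phi}{\sigma^2_\phi} + \log\frac{\sigma_\phi^2}{s_\phi^2} - 1\right)}{4n} + \frac{\log\frac{2\sqrt{n}}{\delta}}{2n}} \\ &\quad + \sqrt{\frac{\|\theta-\theta^0\|_2^2}{4\sigma^2_\theta n} +\frac{N_\theta\left(\frac{s^2_\theta}{\sigma^2_\theta} + \log\frac{\sigma_\theta^2}{s_\theta^2} - 1\right)}{4n} + \frac{\log\frac{2\sqrt{n}}{\delta}}{2n}} . \end{align*}
   Context: In the paper $\phi$ and $\theta$ are the weight vectors of the encoder and decoder neural networks of a (pseudo-)variational autoencoder, $N_\phi$ and $N_\theta$ are the numbers of weights of these networks, and $\ell(\phi,\theta,\mathbf{x})$ is a rescaled, truncated reconstruction loss $-\mathbb{E}_{q_\phi(\mathbf{z}|\mathbf{x})}[\log p_\theta(\mathbf{x}|\mathbf{z})]$ taking values in $[0,1]$; only boundedness in $[0,1]$ and measurability are used. $\mathcal{N}(m,s^2I)$ denotes the isotropic Gaussian with mean $m$ and covariance $s^2I$ in the appropriate dimension; the expectations are over independent $\tilde\phi,\tilde\theta$. *)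

theory Defs
  imports "HOL-Probability.Probability"
begin

text \<open>Isotropic Gaussian N(m, v I) on real^'n, parametrised by the VARIANCE v > 0:
  density w.r.t. Lebesgue measure is the product of one-dimensional normal densities
  with mean m$i and standard deviation sqrt v.\<close>
definition iso_gauss :: "real^'n \<Rightarrow> real \<Rightarrow> (real^'n) measure" where
  "iso_gauss m v = density lborel (\<lambda>x. ennreal (\<Prod>i\<in>UNIV. normal_density (m $ i) (sqrt v) (x $ i)))"

definition pop_risk :: "'x measure \<Rightarrow> ('p \<Rightarrow> 'q \<Rightarrow> 'x \<Rightarrow> real) \<Rightarrow> 'p \<Rightarrow> 'q \<Rightarrow> real" where
  "pop_risk D l phi theta = (\<integral>x. l phi theta x \<partial>D)"

definition emp_risk :: "nat \<Rightarrow> (nat \<Rightarrow> 'x) \<Rightarrow> ('p \<Rightarrow> 'q \<Rightarrow> 'x \<Rightarrow> real) \<Rightarrow> 'p \<Rightarrow> 'q \<Rightarrow> real" where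
  "emp_risk n S l phi theta = (\<Sum>i<n. l phi theta (S i)) / real n"

end

theory Submission
  imports Defs
begin


lemma Basis_vec_real: "(Basis :: (real^'n) set) = range (\<lambda>i. axis i 1)"
  by (auto simp: Basis_vec_def)

lemma inj_axis1: "inj (\<lambda>i::'n::finite. axis i (1::real))"
  by (auto simp: inj_def axis_eq_axis)

lemma nn_integral_vec_prod:
  fixes g :: "'n::finite \<Rightarrow> real \<Rightarrow> ennreal"
  assumes [measurable]: "\<And>i. g i \<in> borel_measurable borel"
  shows "(\<integral>\<^sup>+x. (\<Prod>i\<in>UNIV. g i (x$i)) \<partial>(lborel::(real^'n) measure)) = (\<Prod>i\<in>UNIV. \<integral>\<^sup>+t. g i t \<partial>lborel)"
proof -
  define G where "G b = g (SOME i. b = axis i (1::real))" for b :: "real^'n"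
  have G: "G (axis i 1) = g i" for i
    unfolding G_def by (rule arg_cong[where f=g]) (metis (mono_tags) inj_axis1 injD someI)
  have "(\<integral>\<^sup>+x. (\<Prod>b\<in>Basis. G b (x \<bullet> b)) \<partial>(lborel::(real^'n) measure)) = (\<Prod>b\<in>Basis. \<integral>\<^sup>+t. G b t \<partial>lborel)"
    by (rule nn_integral_lborel_prod) (auto simp: Basis_vec_real G)
  moreover have "(\<Prod>b\<in>Basis. G b (x \<bullet> b)) = (\<Prod>i\<in>UNIV. g i (x$i))" for x :: "real^'n"
    unfolding Basis_vec_real by (subst prod.reindex[OF inj_axis1]) (simp add: G inner_axis)
  moreover have "(\<Prod>b\<in>Basis. \<integral>\<^sup>+t. G b t \<partial>lborel) = (\<Prod>i\<in>UNIV. \<integral>\<^sup>+t. g i t \<partial>lborel)"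
    unfolding Basis_vec_real by (subst prod.reindex[OF inj_axis1]) (simp add: G)
  ultimately show ?thesis by simp
qed

lemma nn_integral_normal_density_1:
  assumes "\<sigma> > 0"
  shows "(\<integral>\<^sup>+t. ennreal (normal_density \<mu> \<sigma> t) \<partial>lborel) = 1"
  using assms by (subst nn_integral_eq_integral) auto

lemma iso_gauss_marg_nn:
  fixes m :: "real^'n" and h :: "real \<Rightarrow> ennreal"
  assumes v: "v > 0" and [measurable]: "h \<in> borel_measurable borel"
  shows "(\<integral>\<^sup>+x. h (x$i) \<partial>iso_gauss m v) = (\<integral>\<^sup>+t. ennreal (normal_density (m$i) (sqrt v) t) * h t \<partial>lborel)"
proof -
  define g where "g j t = (if j = i then ennreal (normal_density (m$i) (sqrt v) t) * h t
      else ennreal (normal_density (m$j) (sqrt v) t))" for j t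
  have [measurable]: "g j \<in> borel_measurable borel" for j unfolding g_def by measurable
  have "(\<integral>\<^sup>+x. h (x$i) \<partial>iso_gauss m v) =
     (\<integral>\<^sup>+x. ennreal (\<Prod>j\<in>UNIV. normal_density (m $ j) (sqrt v) (x $ j)) * h (x$i) \<partial>lborel)"
    unfolding iso_gauss_def by (subst nn_integral_density) auto
  also have "\<dots> = (\<integral>\<^sup>+x. (\<Prod>j\<in>UNIV. g j (x$j)) \<partial>lborel)"
  proof (rule nn_integral_cong)
    fix x :: "real^'n"
    have "ennreal (\<Prod>j\<in>UNIV. normal_density (m $ j) (sqrt v) (x $ j)) * h (x$i) =
       (\<Prod>j\<in>UNIV. ennreal (normal_density (m $ j) (sqrt v) (x $ j))) * h (x$i)"
      by (subst prod_ennreal) auto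
    also have "\<dots> = (\<Prod>j\<in>UNIV. g j (x$j))"
    proof -
      have "(\<Prod>j\<in>UNIV. g j (x$j)) = g i (x$i) * (\<Prod>j\<in>UNIV-{i}. g j (x$j))"
        by (subst prod.remove[of _ i]) auto
      moreover have "(\<Prod>j\<in>UNIV. ennreal (normal_density (m $ j) (sqrt v) (x $ j))) =
         ennreal (normal_density (m $ i) (sqrt v) (x $ i)) * (\<Prod>j\<in>UNIV-{i}. ennreal (normal_density (m $ j) (sqrt v) (x $ j)))"
        by (subst prod.remove[of _ i]) auto
      moreover have "(\<Prod>j\<in>UNIV-{i}. g j (x$j)) = (\<Prod>j\<in>UNIV-{i}. ennreal (normal_density (m $ j) (sqrt v) (x $ j)))"
        by (rule prod.cong) (auto simp: g_def)
      ultimately show ?thesis by (simp add: g_def mult_ac)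
    qed
    finally show "ennreal (\<Prod>j\<in>UNIV. normal_density (m $ j) (sqrt v) (x $ j)) * h (x$i) = (\<Prod>j\<in>UNIV. g j (x$j))" .
  qed
  also have "\<dots> = (\<Prod>j\<in>UNIV. \<integral>\<^sup>+t. g j t \<partial>lborel)"
    by (rule nn_integral_vec_prod) measurable
  also have "\<dots> = (\<integral>\<^sup>+t. g i t \<partial>lborel) * (\<Prod>j\<in>UNIV-{i}. \<integral>\<^sup>+t. g j t \<partial>lborel)"
    by (subst prod.remove[of _ i]) auto
  also have "(\<Prod>j\<in>UNIV-{i}. \<integral>\<^sup>+t. g j t \<partial>lborel) = 1"
    using v by (intro prod.neutral) (auto simp: g_def nn_integral_normal_density_1)
  finally show ?thesis by (simp add: g_def)
qed

lemma prob_space_iso_gauss: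
  assumes v: "v > 0"
  shows "prob_space (iso_gauss (m::real^'n) v)"
proof
  have "emeasure (iso_gauss m v) (space (iso_gauss m v)) = (\<integral>\<^sup>+x. (\<lambda>t. 1) (x$undefined) \<partial>iso_gauss m v)"
    by (simp add: iso_gauss_def)
  also have "\<dots> = 1"
    using v by (subst iso_gauss_marg_nn) (auto simp: nn_integral_normal_density_1)
  finally show "emeasure (iso_gauss m v) (space (iso_gauss m v)) = 1" .
qed

lemma sets_iso_gauss[simp, measurable_cong]: "sets (iso_gauss m v) = sets borel"
  by (simp add: iso_gauss_def)

lemma space_iso_gauss[simp]: "space (iso_gauss m v) = UNIV"
  by (simp add: iso_gauss_def)

lemma distr_iso_gauss_comp:
  fixes m :: "real^'n"
  assumes v: "v > 0"
  shows "distr (iso_gauss m v) borel (\<lambda>x. x$i) = density lborel (normal_density (m$i) (sqrt v))"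
proof (rule measure_eqI)
  fix A :: "real set" assume A: "A \<in> sets (distr (iso_gauss m v) borel (\<lambda>x. x$i))"
  then have [measurable]: "A \<in> sets borel" by simp
  have "emeasure (distr (iso_gauss m v) borel (\<lambda>x. x$i)) A = (\<integral>\<^sup>+x. indicator A (x$i) \<partial>iso_gauss m v)"
  proof -
    have mi: "(\<lambda>x::real^'n. x$i) \<in> borel_measurable borel" by measurable
    have P: "(\<lambda>x::real^'n. x$i) -` A \<in> sets borel"
      using measurable_sets[OF mi, of A] by simp
    have "emeasure (distr (iso_gauss m v) borel (\<lambda>x. x$i)) A = emeasure (iso_gauss m v) ((\<lambda>x::real^'n. x$i) -` A)"
      using mi by (subst emeasure_distr) (auto simp: measurable_def)
    also have "\<dots> = (\<integral>\<^sup>+x. indicator ((\<lambda>x::real^'n. x$i) -` A) x \<partial>iso_gauss m v)"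
      using P by (subst nn_integral_indicator) auto
    finally show ?thesis by (simp add: indicator_def)
  qed
  also have "\<dots> = (\<integral>\<^sup>+t. ennreal (normal_density (m$i) (sqrt v) t) * indicator A t \<partial>lborel)"
    using v by (subst iso_gauss_marg_nn) auto
  also have "\<dots> = emeasure (density lborel (normal_density (m$i) (sqrt v))) A"
    by (subst emeasure_density) auto
  finally show "emeasure (distr (iso_gauss m v) borel (\<lambda>x. x$i)) A = emeasure (density lborel (normal_density (m$i) (sqrt v))) A" .
qed simp

lemma iso_gauss_comp_integrable:
  fixes m :: "real^'n"
  assumes v: "v > 0" and [measurable]: "f \<in> borel_measurable borel"
  shows "integrable (iso_gauss m v) (\<lambda>x. f (x$i)) \<longleftrightarrow> integrable lborel (\<lambda>t. normal_density (m$i) (sqrt v) t * f t)"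
proof -
  have "integrable (iso_gauss m v) (\<lambda>x. f (x$i)) \<longleftrightarrow> integrable (distr (iso_gauss m v) borel (\<lambda>x. x$i)) f"
    by (subst integrable_distr_eq) auto
  also have "\<dots> \<longleftrightarrow> integrable lborel (\<lambda>t. normal_density (m$i) (sqrt v) t * f t)"
    unfolding distr_iso_gauss_comp[OF v] by (subst integrable_density) auto
  finally show ?thesis .
qed

lemma iso_gauss_comp_integral:
  fixes m :: "real^'n"
  assumes v: "v > 0" and [measurable]: "f \<in> borel_measurable borel"
  shows "(\<integral>x. f (x$i) \<partial>iso_gauss m v) = (\<integral>t. normal_density (m$i) (sqrt v) t * f t \<partial>lborel)"
proof -
  have "(\<integral>x. f (x$i) \<partial>iso_gauss m v) = integral\<^sup>L (distr (iso_gauss m v) borel (\<lambda>x. x$i)) f"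
    by (subst integral_distr) auto
  also have "\<dots> = (\<integral>t. normal_density (m$i) (sqrt v) t * f t \<partial>lborel)"
    unfolding distr_iso_gauss_comp[OF v] by (subst integral_density) auto
  finally show ?thesis .
qed

lemma iso_gauss_moments:
  fixes m :: "real^'n"
  assumes v: "v > 0"
  shows "integrable (iso_gauss m v) (\<lambda>x. x$i - m$i)"
    and "integrable (iso_gauss m v) (\<lambda>x. (x$i - m$i)^2)"
    and "(\<integral>x. x$i - m$i \<partial>iso_gauss m v) = 0"
    and "(\<integral>x. (x$i - m$i)^2 \<partial>iso_gauss m v) = v"
proof -
  have sv: "sqrt v > 0" using v by simp
  show "integrable (iso_gauss m v) (\<lambda>x. x$i - m$i)"
    using iso_gauss_comp_integrable[OF v, of "\<lambda>t. t - m$i" m i] integrable_normal_moment[OF sv, of "m$i" 1] by simp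
  show "integrable (iso_gauss m v) (\<lambda>x. (x$i - m$i)^2)"
    using iso_gauss_comp_integrable[OF v, of "\<lambda>t. (t - m$i)^2" m i] integrable_normal_moment[OF sv, of "m$i" 2] by simp
  show "(\<integral>x. x$i - m$i \<partial>iso_gauss m v) = 0"
    using iso_gauss_comp_integral[OF v, of "\<lambda>t. t - m$i" m i] integral_normal_moment_odd[OF sv, of "m$i" 0] by simp
  show "(\<integral>x. (x$i - m$i)^2 \<partial>iso_gauss m v) = v"
    using iso_gauss_comp_integral[OF v, of "\<lambda>t. (t - m$i)^2" m i] integral_normal_moment_even[OF sv, of "m$i" 1] v
    by (simp add: power2_eq_square)
qed

definition gdens :: "real^'n \<Rightarrow> real \<Rightarrow> real^'n \<Rightarrow> real" where
  "gdens m v x = (\<Prod>i\<in>UNIV. normal_density (m $ i) (sqrt v) (x $ i))"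

lemma gdens_pos: "v > 0 \<Longrightarrow> gdens m v x > 0"
  unfolding gdens_def by (intro prod_pos normal_density_pos) auto

lemma gdens_measurable[measurable]: "gdens m v \<in> borel_measurable borel"
  unfolding gdens_def by measurable

lemma iso_gauss_change:
  fixes m m0 :: "real^'n"
  assumes s: "s > 0" and v: "v > 0"
  shows "iso_gauss m0 v = density (iso_gauss m s) (\<lambda>x. ennreal (gdens m0 v x / gdens m s x))"
proof -
  have "density (iso_gauss m s) (\<lambda>x. ennreal (gdens m0 v x / gdens m s x)) =
     density lborel (\<lambda>x. ennreal (gdens m s x) * ennreal (gdens m0 v x / gdens m s x))"
    unfolding iso_gauss_def gdens_def[symmetric] by (subst density_density_eq) auto
  also have "\<dots> = density lborel (\<lambda>x. ennreal (gdens m0 v x))"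
  proof -
    have "ennreal (gdens m s x) * ennreal (gdens m0 v x / gdens m s x) = ennreal (gdens m0 v x)" for x
      using gdens_pos[OF s, of m x] gdens_pos[OF v, of m0 x]
      by (subst ennreal_mult[symmetric]) auto
    then show ?thesis by simp
  qed
  finally show ?thesis unfolding iso_gauss_def gdens_def by simp
qed

definition lratio :: "real^'n \<Rightarrow> real \<Rightarrow> real^'n \<Rightarrow> real \<Rightarrow> real^'n \<Rightarrow> real" where
  "lratio m s m0 v x = ln (gdens m s x) - ln (gdens m0 v x)"

lemma ln_normal_density:
  assumes "\<sigma> > 0"
  shows "ln (normal_density \<mu> \<sigma> x) = - ln (sqrt (2 * pi * \<sigma>\<^sup>2)) - (x - \<mu>)\<^sup>2 / (2 * \<sigma>\<^sup>2)"
  using assms unfolding normal_density_def by (simp add: ln_mult ln_div)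

lemma lratio_eq:
  fixes m m0 :: "real^'n"
  assumes s: "s > 0" and v: "v > 0"
  shows "lratio m s m0 v x = (\<Sum>i\<in>UNIV. (ln (v / s) / 2 + (m$i - m0 $ i)^2 / (2 * v))
     + (1/(2 * v) - 1/(2 * s)) * (x$i - m$i)^2 + ((m$i - m0 $ i) / v) * (x$i - m$i))"
proof -
  have ln_gd: "ln (gdens mm vv x) = (\<Sum>i\<in>UNIV. - ln (sqrt (2 * pi * vv)) - (x$i - mm$i)\<^sup>2 / (2 * vv))"
    if "vv > 0" for mm :: "real^'n" and vv
    using that unfolding gdens_def
    by (subst ln_prod) (auto simp: ln_normal_density intro!: sum.cong dest: normal_density_pos[of "sqrt vv"] simp del: normal_density_nonneg, metis normal_density_pos real_sqrt_gt_0_iff less_irrefl)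
  have e: "- ln (sqrt (2 * pi * s)) + ln (sqrt (2 * pi * v)) = ln (v/s) / 2"
    using s v by (simp add: ln_sqrt ln_mult ln_div field_simps)
  show ?thesis
    unfolding lratio_def ln_gd[OF s] ln_gd[OF v] sum_subtractf[symmetric]
  proof (rule sum.cong[OF refl])
    fix i
    have key: "- L1 - a\<^sup>2 / (2 * s) - (- L2 - (a + d)\<^sup>2 / (2 * v)) =
       ln (v / s) / 2 + d\<^sup>2 / (2 * v) + (1 / (2 * v) - 1 / (2 * s)) * a\<^sup>2 + d / v * a"
      if "- L1 + L2 = ln (v / s) / 2" for L1 L2 a d :: real
    proof -
      have "(a + d)\<^sup>2 / (2 * v) = a\<^sup>2 / (2 * v) + d\<^sup>2 / (2 * v) + d / v * a"
        using v by (simp add: power2_eq_square field_simps)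
      then show ?thesis using that by (simp add: algebra_simps diff_divide_distrib)
    qed
    show "- ln (sqrt (2 * pi * s)) - (x $ i - m $ i)\<^sup>2 / (2 * s) -
          (- ln (sqrt (2 * pi * v)) - (x $ i - m0 $ i)\<^sup>2 / (2 * v)) =
          ln (v / s) / 2 + (m $ i - m0 $ i)\<^sup>2 / (2 * v) +
          (1 / (2 * v) - 1 / (2 * s)) * (x $ i - m $ i)\<^sup>2 +
          (m $ i - m0 $ i) / v * (x $ i - m $ i)"
      using key[OF e, of "x $ i - m $ i" "m $ i - m0 $ i"] by simp
  qed
qed

lemma norm_vec_sq: "(norm (x::real^'n))\<^sup>2 = (\<Sum>i\<in>UNIV. (x$i)\<^sup>2)"
  by (subst power2_norm_eq_inner) (simp add: inner_vec_def power2_eq_square)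

lemma lratio_integral:
  fixes m m0 :: "real^'n"
  assumes s: "s > 0" and v: "v > 0"
  shows "integrable (iso_gauss m s) (lratio m s m0 v)"
    and "(\<integral>x. lratio m s m0 v x \<partial>iso_gauss m s) =
       (norm (m - m0))\<^sup>2 / (2 * v) + real CARD('n) * (s / v + ln (v / s) - 1) / 2"
proof -
  interpret prob_space "iso_gauss m s" by (rule prob_space_iso_gauss[OF s])
  have eq: "lratio m s m0 v = (\<lambda>x. \<Sum>i\<in>UNIV. (ln (v / s) / 2 + (m$i - m0 $ i)^2 / (2 * v))
     + (1/(2 * v) - 1/(2 * s)) * (x$i - m$i)^2 + ((m$i - m0 $ i) / v) * (x$i - m$i))"
    using lratio_eq[OF s v] by blast
  have pU: "prob UNIV = 1" using prob_space by simp
  note mo = iso_gauss_moments[OF s, of m] pU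
  have int_i: "integrable (iso_gauss m s) (\<lambda>x. (ln (v / s) / 2 + (m$i - m0 $ i)^2 / (2 * v))
     + (1/(2 * v) - 1/(2 * s)) * (x$i - m$i)^2 + ((m$i - m0 $ i) / v) * (x$i - m$i))" for i
    using mo by (intro Bochner_Integration.integrable_add integrable_mult_right) auto
  show "integrable (iso_gauss m s) (lratio m s m0 v)"
    unfolding eq by (intro Bochner_Integration.integrable_sum int_i)
  have "(\<integral>x. lratio m s m0 v x \<partial>iso_gauss m s) = (\<Sum>i\<in>UNIV. (ln (v / s) / 2 + (m$i - m0 $ i)^2 / (2 * v))
     + (1/(2 * v) - 1/(2 * s)) * s)"
    unfolding eq
    apply (subst Bochner_Integration.integral_sum)
     apply (rule int_i)
    apply (rule sum.cong[OF refl])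
    apply (subst Bochner_Integration.integral_add)
      apply (use mo in \<open>auto intro!: Bochner_Integration.integrable_add integrable_mult_right\<close>)[2]
    apply (subst Bochner_Integration.integral_add)
      apply (use mo in \<open>auto intro!: Bochner_Integration.integrable_add integrable_mult_right\<close>)[2]
    apply (use mo in \<open>simp\<close>)
    done
  also have "\<dots> = (norm (m - m0))\<^sup>2 / (2 * v) + real CARD('n) * (s / v + ln (v / s) - 1) / 2"
  proof -
    have "(\<Sum>i\<in>UNIV. (ln (v / s) / 2 + (m$i - m0 $ i)^2 / (2 * v)) + (1/(2 * v) - 1/(2 * s)) * s)
       = (\<Sum>i\<in>UNIV. (m$i - m0 $ i)^2) / (2 * v) + real CARD('n) * (ln (v / s) / 2 + (1/(2 * v) - 1/(2 * s)) * s)"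
    proof -
      have gen: "(\<Sum>i\<in>UNIV. (c + f i / w) + k) = (\<Sum>i\<in>UNIV. f i) / w + real CARD('n) * (c + k)"
        for c k w and f :: "'n \<Rightarrow> real"
        by (simp add: sum.distrib sum_divide_distrib distrib_left)
      show ?thesis by (rule gen)
    qed
    also have e: "(1/(2 * v) - 1/(2 * s)) * s = (s / v - 1) / 2"
      using s v by (simp add: field_simps)
    finally have 1: "(\<Sum>i\<in>UNIV. (ln (v / s) / 2 + (m$i - m0 $ i)^2 / (2 * v)) + (1/(2 * v) - 1/(2 * s)) * s)
       = (\<Sum>i\<in>UNIV. (m$i - m0 $ i)^2) / (2 * v) + real CARD('n) * (ln (v / s) / 2 + (s / v - 1) / 2)" by (simp only: e)
    have 2: "(norm (m - m0))\<^sup>2 = (\<Sum>i\<in>UNIV. (m$i - m0 $ i)^2)" by (simp add: norm_vec_sq)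
    have 3: "real CARD('n) * (ln (v / s) / 2 + (s / v - 1) / 2) = real CARD('n) * (s / v + ln (v / s) - 1) / 2"
      by (simp add: field_simps)
    show ?thesis using 1 2 3 by simp
  qed
  finally show "(\<integral>x. lratio m s m0 v x \<partial>iso_gauss m s) =
       (norm (m - m0))\<^sup>2 / (2 * v) + real CARD('n) * (s / v + ln (v / s) - 1) / 2" .
qed



lemma DV_bound:
  fixes Q :: "'a measure"
  assumes Q: "prob_space Q"
    and Fm[measurable]: "F \<in> borel_measurable Q" and F0: "\<And>w. w \<in> space Q \<Longrightarrow> 0 \<le> F w"
    and FB: "\<And>w. w \<in> space Q \<Longrightarrow> F w \<le> B"
    and Li: "integrable Q L"
    and C: "(\<integral>\<^sup>+w. ennreal (exp (- L w)) * ennreal (exp (F w)) \<partial>Q) \<le> ennreal C"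
  shows "(\<integral>w. F w \<partial>Q) \<le> (\<integral>w. L w \<partial>Q) + ln C"
proof -
  interpret prob_space Q by (rule Q)
  have Lm[measurable]: "L \<in> borel_measurable Q" using Li by auto
  define g where "g w = F w - L w" for w
  have gm[measurable]: "g \<in> borel_measurable Q" unfolding g_def by measurable
  have Fi: "integrable Q F"
    by (rule integrable_const_bound[where B=B]) (use F0 FB in auto)
  have gi: "integrable Q g" unfolding g_def using Fi Li by auto
  have eq: "ennreal (exp (- L w)) * ennreal (exp (F w)) = ennreal (exp (g w))" for w
    by (simp add: g_def ennreal_mult[symmetric] exp_add[symmetric])
  have nn: "(\<integral>\<^sup>+w. ennreal (exp (g w)) \<partial>Q) \<le> ennreal C"
    using C by (simp add: eq)
  have egi: "integrable Q (\<lambda>w. exp (g w))"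
    by (rule integrableI_bounded) (use nn in \<open>auto simp: top_unique less_top[symmetric] intro: le_less_trans\<close>)
  have "ennreal (\<integral>w. exp (g w) \<partial>Q) \<le> ennreal C"
    using nn by (subst nn_integral_eq_integral[symmetric]) (use egi in auto)
  define c where "c = (\<integral>w. g w \<partial>Q)"
  have "(\<integral>w. exp c * (1 + (g w - c)) \<partial>Q) \<le> (\<integral>w. exp (g w) \<partial>Q)"
  proof (rule integral_mono)
    show "integrable Q (\<lambda>w. exp c * (1 + (g w - c)))" using gi by auto
    show "integrable Q (\<lambda>w. exp (g w))" by (rule egi)
    fix w
    have "exp c * (1 + (g w - c)) \<le> exp c * exp (g w - c)"
      by (intro mult_left_mono exp_ge_add_one_self) auto
    also have "\<dots> = exp (g w)" by (simp add: exp_diff)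
    finally show "exp c * (1 + (g w - c)) \<le> exp (g w)" .
  qed
  moreover have "(\<integral>w. exp c * (1 + (g w - c)) \<partial>Q) = exp c"
    using gi by (simp add: c_def prob_space algebra_simps)
  ultimately have ec: "exp c \<le> (\<integral>w. exp (g w) \<partial>Q)" by simp
  have C0: "C > 0"
  proof (rule ccontr)
    assume "\<not> C > 0"
    then have "ennreal C = 0" by (simp add: ennreal_eq_0_iff)
    with \<open>ennreal (\<integral>w. exp (g w) \<partial>Q) \<le> ennreal C\<close> have "ennreal (\<integral>w. exp (g w) \<partial>Q) = 0" by simp
    moreover have "(\<integral>w. exp (g w) \<partial>Q) > 0" using ec by (meson exp_gt_zero less_le_trans)
    ultimately show False by simp
  qed
  have I: "(\<integral>w. exp (g w) \<partial>Q) \<le> C"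
    using \<open>ennreal (\<integral>w. exp (g w) \<partial>Q) \<le> ennreal C\<close> C0 by (simp add: ennreal_le_iff2 less_imp_le)
  have "exp c \<le> C" using I ec by simp
  then have "c \<le> ln C" using C0 by (simp add: ln_ge_iff)
  moreover have "c = (\<integral>w. F w \<partial>Q) - (\<integral>w. L w \<partial>Q)"
    unfolding c_def g_def using Fi Li by simp
  ultimately show ?thesis by simp
qed



lemma indep_vars_PiM_coords:
  fixes D :: "'a measure" and I :: "'i set"
  assumes D: "prob_space D" and I: "finite I" "I \<noteq> {}"
  shows "prob_space.indep_vars (PiM I (\<lambda>_. D)) (\<lambda>_. D) (\<lambda>i S. S i) I"
proof -
  interpret M: prob_space "PiM I (\<lambda>_. D)" by (intro prob_space_PiM D)
  show ?thesis
  proof (subst M.indep_vars_iff_distr_eq_PiM')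
    show "I \<noteq> {}" by fact
    show "(\<lambda>S. S i) \<in> measurable (PiM I (\<lambda>_. D)) D" if "i \<in> I" for i
      using that by (rule measurable_component_singleton)
    have "distr (PiM I (\<lambda>_. D)) (PiM I (\<lambda>_. D)) (\<lambda>x. \<lambda>i\<in>I. x i) = distr (PiM I (\<lambda>_. D)) (PiM I (\<lambda>_. D)) (\<lambda>x. x)"
      by (intro distr_cong) (auto simp: space_PiM PiE_def extensional_restrict)
    also have "\<dots> = PiM I (\<lambda>_. D)" by simp
    also have "\<dots> = PiM I (\<lambda>i. distr (PiM I (\<lambda>_. D)) D (\<lambda>S. S i))"
      by (intro PiM_cong refl distr_PiM_component[symmetric] D)
    finally show "distr (PiM I (\<lambda>_. D)) (PiM I (\<lambda>_. D)) (\<lambda>x. \<lambda>i\<in>I. x i) = PiM I (\<lambda>i. distr (PiM I (\<lambda>_. D)) D (\<lambda>S. S i))" .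
  qed
qed

lemma hoeffding_sample:
  fixes D :: "'x measure" and f :: "'x \<Rightarrow> real" and n :: nat
  assumes D: "prob_space D" and fm[measurable]: "f \<in> borel_measurable D"
    and f01: "\<And>x. x \<in> space D \<Longrightarrow> 0 \<le> f x \<and> f x \<le> 1"
    and n: "n > 0" and eps: "\<epsilon> \<ge> 0"
  shows "measure (PiM {..<n} (\<lambda>_. D)) {S \<in> space (PiM {..<n} (\<lambda>_. D)).
           \<epsilon> \<le> \<bar>(\<Sum>i<n. f (S i)) / real n - (\<integral>x. f x \<partial>D)\<bar>} \<le> 2 * exp (- 2 * real n * \<epsilon>\<^sup>2)"
proof -
  let ?M = "PiM {..<n} (\<lambda>_. D)"
  interpret M: prob_space ?M by (intro prob_space_PiM D)
  have c0[measurable]: "(\<lambda>S. S i) \<in> measurable ?M D" if "i < n" for i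
    using that by (intro measurable_component_singleton) auto
  have Y0[measurable]: "(\<lambda>S. f (S 0)) \<in> borel_measurable ?M"
    using n by measurable
  have dX: "distr ?M borel (\<lambda>S. f (S i)) = distr D borel f" if "i < n" for i
  proof -
    have "distr ?M borel (\<lambda>S. f (S i)) = distr (distr ?M D (\<lambda>S. S i)) borel f"
      using that by (subst distr_distr) (auto simp: comp_def)
    also have "distr ?M D (\<lambda>S. S i) = D"
      using that by (intro distr_PiM_component D) auto
    finally show ?thesis .
  qed
  interpret H: Hoeffding_ineq_iid ?M "{..<n}" "\<lambda>i S. f (S i)" "\<lambda>S. f (S 0)" 0 1 "M.expectation (\<lambda>S. f (S 0))"
  proof unfold_locales
    show "finite {..<n}" by simp
    show "M.indep_vars (\<lambda>_. borel) (\<lambda>i S. f (S i)) {..<n}"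
      using M.indep_vars_compose2[OF indep_vars_PiM_coords[OF D, of "{..<n}"], of "\<lambda>_. f" "\<lambda>_. borel"] n
      by auto
    show "distr ?M borel (\<lambda>S. f (S i)) = distr ?M borel (\<lambda>S. f (S 0))" if "i \<in> {..<n}" for i
      using that n by (simp add: dX)
    show "(\<lambda>S. f (S 0)) \<in> borel_measurable ?M" by (rule Y0)
    show "AE x in ?M. f (x 0) \<in> {0..1}"
      using n by (intro AE_I2) (auto simp: space_PiM PiE_def Pi_def f01)
  qed simp
  have mu: "M.expectation (\<lambda>S. f (S 0)) = (\<integral>x. f x \<partial>D)"
  proof -
    have "M.expectation (\<lambda>S. f (S 0)) = integral\<^sup>L (distr ?M borel (\<lambda>S. f (S 0))) (\<lambda>x. x)"
      by (subst integral_distr) auto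
    also have "\<dots> = integral\<^sup>L (distr D borel f) (\<lambda>x. x)" using n by (simp add: dX)
    also have "\<dots> = (\<integral>x. f x \<partial>D)" by (subst integral_distr) auto
    finally show ?thesis .
  qed
  show ?thesis
    using H.Hoeffding_ineq_abs_ge'[OF eps] n by (auto simp: mu lessThan_empty_iff)
qed

lemma exp_le_grid:
  fixes y :: real and N :: nat
  assumes "0 \<le> y" "y \<le> real N"
  shows "exp y \<le> (\<Sum>j\<le>N. exp (real j + 1) * (if real j \<le> y then 1 else 0))"
proof -
  define k where "k = nat \<lfloor>y\<rfloor>"
  have k1: "real k \<le> y" using assms unfolding k_def by linarith
  have k2: "y < real k + 1" using assms unfolding k_def by linarith
  have kN: "k \<le> N" using k1 assms by linarith
  have "exp y \<le> exp (real k + 1)" using k2 by simp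
  also have "\<dots> = exp (real k + 1) * (if real k \<le> y then 1 else 0)" using k1 by simp
  also have "\<dots> \<le> (\<Sum>j\<le>N. exp (real j + 1) * (if real j \<le> y then 1 else 0))"
    by (rule member_le_sum[where f="\<lambda>j. exp (real j + 1) * (if real j \<le> y then 1 else 0)"]) (use kN in auto)
  finally show ?thesis .
qed

lemma grid_sum_bound:
  fixes p :: "nat \<Rightarrow> real" and n :: nat
  assumes p0: "p 0 \<le> 1" and pj: "\<And>j. j \<ge> 1 \<Longrightarrow> p j \<le> 2 * exp (- real j)"
  shows "(\<Sum>j\<le>2*n. exp (real j + 1) * p j) \<le> exp 1 * (1 + 4 * real n)"
proof -
  have split: "{..2*n} = insert 0 {1..2*n}" by auto
  have "(\<Sum>j\<le>2*n. exp (real j + 1) * p j) = exp 1 * p 0 + (\<Sum>j\<in>{1..2*n}. exp (real j + 1) * p j)"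
    by (subst split, subst sum.insert) auto
  also have "(\<Sum>j\<in>{1..2*n}. exp (real j + 1) * p j) \<le> (\<Sum>j\<in>{1..2*n}. 2 * exp 1)"
  proof (rule sum_mono)
    fix j assume j: "j \<in> {1..2*n}"
    have "exp (real j + 1) * p j \<le> exp (real j + 1) * (2 * exp (- real j))"
      using pj[of j] j by (intro mult_left_mono) auto
    also have "\<dots> = 2 * exp 1"
      by (simp add: exp_add[symmetric] mult.left_commute)
    finally show "exp (real j + 1) * p j \<le> 2 * exp 1" .
  qed
  also have "(\<Sum>j\<in>{1..2*n}. 2 * exp 1) = real (2*n) * (2 * exp 1)" by simp
  finally have "(\<Sum>j\<le>2*n. exp (real j + 1) * p j) \<le> exp 1 * p 0 + real (2*n) * (2 * exp 1)" by simp
  also have "exp 1 * p 0 \<le> exp 1" using p0 by simp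
  finally show ?thesis by (simp add: algebra_simps)
qed

lemma exp_moment_sample:
  fixes D :: "'x measure" and f :: "'x \<Rightarrow> real" and n :: nat
  assumes D: "prob_space D" and fm[measurable]: "f \<in> borel_measurable D"
    and f01: "\<And>x. x \<in> space D \<Longrightarrow> 0 \<le> f x \<and> f x \<le> 1"
    and n: "n > 0"
  shows "(\<integral>\<^sup>+S. ennreal (exp (2 * real n * ((\<integral>x. f x \<partial>D) - (\<Sum>i<n. f (S i)) / real n)\<^sup>2))
            \<partial>PiM {..<n} (\<lambda>_. D)) \<le> ennreal (exp 1 * (1 + 4 * real n))"
proof -
  let ?M = "PiM {..<n} (\<lambda>_. D)"
  interpret M: prob_space ?M by (intro prob_space_PiM D)
  interpret D: prob_space D by (rule D)
  define mu where "mu = (\<integral>x. f x \<partial>D)"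
  define Y where "Y S = 2 * real n * (mu - (\<Sum>i<n. f (S i)) / real n)\<^sup>2" for S
  have Ym[measurable]: "Y \<in> borel_measurable ?M" unfolding Y_def
    by (intro borel_measurable_times borel_measurable_const borel_measurable_power borel_measurable_diff
        borel_measurable_divide borel_measurable_sum) (auto intro!: measurable_compose[OF _ fm] measurable_component_singleton)
  have mu01: "0 \<le> mu" "mu \<le> 1"
    unfolding mu_def using f01 by (auto intro!: integral_nonneg_AE D.integral_le_const AE_I2 D.integrable_const_bound[where B=1])
  have av01: "0 \<le> (\<Sum>i<n. f (S i)) / real n" "(\<Sum>i<n. f (S i)) / real n \<le> 1" if "S \<in> space ?M" for S
  proof -
    have fS: "0 \<le> f (S i) \<and> f (S i) \<le> 1" if "i < n" for i
      using f01 \<open>S \<in> space ?M\<close> that by (auto simp: space_PiM PiE_def Pi_def)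
    show "0 \<le> (\<Sum>i<n. f (S i)) / real n" using fS by (auto intro!: sum_nonneg divide_nonneg_nonneg)
    have "(\<Sum>i<n. f (S i)) \<le> (\<Sum>i<n. 1)" using fS by (intro sum_mono) auto
    then show "(\<Sum>i<n. f (S i)) / real n \<le> 1" using n by simp
  qed
  have Y0: "0 \<le> Y S" for S unfolding Y_def by simp
  have YN: "Y S \<le> real (2*n)" if "S \<in> space ?M" for S
  proof -
    have "\<bar>mu - (\<Sum>i<n. f (S i)) / real n\<bar> \<le> 1" using av01[OF that] mu01 by linarith
    then have "(mu - (\<Sum>i<n. f (S i)) / real n)\<^sup>2 \<le> 1"
      by (metis abs_le_square_iff abs_one one_power2)
    then have "real n * (mu - (\<Sum>i<n. f (S i)) / real n)\<^sup>2 \<le> real n * 1"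
      by (intro mult_left_mono) auto
    then show ?thesis unfolding Y_def by simp
  qed
  define A where "A j = {S \<in> space ?M. real j \<le> Y S}" for j :: nat
  have Am[measurable]: "A j \<in> sets ?M" for j unfolding A_def by measurable
  have pA0: "M.prob (A 0) \<le> 1" by simp
  have pAj: "M.prob (A j) \<le> 2 * exp (- real j)" if j: "j \<ge> 1" for j
  proof -
    define e where "e = sqrt (real j / (2 * real n))"
    have "A j = {S \<in> space ?M. e \<le> \<bar>(\<Sum>i<n. f (S i)) / real n - mu\<bar>}"
    proof -
      have "real j \<le> Y S \<longleftrightarrow> e \<le> \<bar>(\<Sum>i<n. f (S i)) / real n - mu\<bar>" for S
      proof -
        have "real j \<le> Y S \<longleftrightarrow> real j / (2 * real n) \<le> (mu - (\<Sum>i<n. f (S i)) / real n)\<^sup>2"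
          unfolding Y_def using n by (simp add: field_simps)
        also have "\<dots> \<longleftrightarrow> e \<le> \<bar>(\<Sum>i<n. f (S i)) / real n - mu\<bar>"
          unfolding e_def by (subst real_sqrt_le_iff[symmetric]) (simp add: abs_minus_commute)
        finally show ?thesis .
      qed
      then show ?thesis unfolding A_def by auto
    qed
    also have "M.prob \<dots> \<le> 2 * exp (- 2 * real n * e\<^sup>2)"
      unfolding mu_def by (rule hoeffding_sample[OF D fm f01 n]) (auto simp: e_def)
    also have "- 2 * real n * e\<^sup>2 = - real j" unfolding e_def using n by simp
    finally show ?thesis by simp
  qed
  have "(\<integral>\<^sup>+S. ennreal (exp (Y S)) \<partial>?M) \<le>
      (\<integral>\<^sup>+S. (\<Sum>j\<le>2*n. ennreal (exp (real j + 1)) * indicator (A j) S) \<partial>?M)"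
  proof (rule nn_integral_mono)
    fix S assume S: "S \<in> space ?M"
    have "exp (Y S) \<le> (\<Sum>j\<le>2*n. exp (real j + 1) * (if real j \<le> Y S then 1 else 0))"
      by (rule exp_le_grid[OF Y0 YN[OF S]])
    also have "\<dots> = (\<Sum>j\<le>2*n. exp (real j + 1) * indicator (A j) S)"
      using S by (intro sum.cong) (auto simp: A_def indicator_def)
    finally have "ennreal (exp (Y S)) \<le> ennreal (\<Sum>j\<le>2*n. exp (real j + 1) * indicator (A j) S)"
      by (rule ennreal_leI)
    also have "\<dots> = (\<Sum>j\<le>2*n. ennreal (exp (real j + 1)) * indicator (A j) S)"
    proof -
      have "ennreal (\<Sum>j\<le>2*n. exp (real j + 1) * indicator (A j) S) = (\<Sum>j\<le>2*n. ennreal (exp (real j + 1) * indicator (A j) S))"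
        by (rule sum_ennreal[symmetric]) auto
      also have "\<dots> = (\<Sum>j\<le>2*n. ennreal (exp (real j + 1)) * indicator (A j) S)"
        by (intro sum.cong refl) (auto simp: indicator_def)
      finally show ?thesis .
    qed
    finally show "ennreal (exp (Y S)) \<le> (\<Sum>j\<le>2*n. ennreal (exp (real j + 1)) * indicator (A j) S)" .
  qed
  also have "\<dots> = (\<Sum>j\<le>2*n. ennreal (exp (real j + 1)) * emeasure ?M (A j))"
    by (subst nn_integral_sum) (auto simp: nn_integral_cmult_indicator)
  also have "\<dots> = ennreal (\<Sum>j\<le>2*n. exp (real j + 1) * M.prob (A j))"
    by (subst sum_ennreal[symmetric]) (auto simp: M.emeasure_eq_measure ennreal_mult)
  also have "\<dots> \<le> ennreal (exp 1 * (1 + 4 * real n))"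
    by (intro ennreal_leI grid_sum_bound pAj pA0)
  finally show ?thesis unfolding Y_def mu_def .
qed



lemma distr_pair_snd_prob:
  assumes N: "prob_space N" and M: "prob_space M"
  shows "distr (N \<Otimes>\<^sub>M M) M snd = M"
proof -
  interpret N: prob_space N by (rule N)
  interpret M: prob_space M by (rule M)
  interpret pair_sigma_finite N M by unfold_locales
  show ?thesis
  proof (intro measure_eqI)
    fix A assume A: "A \<in> sets (distr (N \<Otimes>\<^sub>M M) M snd)"
    from A have "emeasure (distr (N \<Otimes>\<^sub>M M) M snd) A = emeasure (N \<Otimes>\<^sub>M M) (space N \<times> A)"
      by (auto simp add: emeasure_distr space_pair_measure dest: sets.sets_into_space intro!: arg_cong2[where f=emeasure])
    with A show "emeasure (distr (N \<Otimes>\<^sub>M M) M snd) A = emeasure M A"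
      by (simp add: M.emeasure_pair_measure_Times[OF sets.top[of N]] N.emeasure_space_1)
  qed simp
qed

lemma sqrt_sum_bound:
  fixes x a b c :: real
  assumes "x\<^sup>2 \<le> a + b + 4 * c" "0 \<le> a" "0 \<le> b" "0 \<le> c"
  shows "x \<le> sqrt (a + c) + sqrt (b + c)"
proof -
  have "x \<le> sqrt (x\<^sup>2)" by (simp add: real_sqrt_abs)
  also have "\<dots> \<le> sqrt (a + b + 4 * c)" by (rule real_sqrt_le_mono[OF assms(1)])
  also have "\<dots> \<le> sqrt (a + c) + sqrt (b + c)"
  proof (rule real_le_lsqrt)
    show "0 \<le> sqrt (a + c) + sqrt (b + c)" using assms by simp
    have "c \<le> sqrt ((a + c) * (b + c))"
    proof (intro real_le_rsqrt)
      have "0 \<le> a * b" "0 \<le> a * c" "0 \<le> b * c" using assms by auto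
      then show "c\<^sup>2 \<le> (a + c) * (b + c)" by (simp add: algebra_simps power2_eq_square)
    qed
    then show "a + b + 4 * c \<le> (sqrt (a + c) + sqrt (b + c))\<^sup>2"
      using assms by (simp add: power2_sum real_sqrt_mult)
  qed
  finally show ?thesis .
qed

lemma ln_K_bound:
  fixes n :: nat and \<delta> :: real
  assumes n: "n > 0" and d: "0 < \<delta>" "\<delta> < 1"
  shows "ln (exp 1 * (1 + 4 * real n) / \<delta>) \<le> 4 * ln (2 * sqrt (real n) / \<delta>)"
proof -
  have n1: "real n \<ge> 1" using n by simp
  have "exp 1 * (1 + 4 * real n) \<le> 3 * (1 + 4 * real n)"
    using exp_le by (intro mult_right_mono) auto
  also have "\<dots> \<le> 16 * (real n)\<^sup>2"
  proof -
    have h: "real n * 1 \<le> real n * real n" using n1 by (intro mult_left_mono) auto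
    then have h: "real n \<le> real n * real n" by simp
    have "16 * (real n)\<^sup>2 = 16 * (real n * real n)" by (simp add: power2_eq_square)
    have g: "x \<le> y \<Longrightarrow> 1 \<le> x \<Longrightarrow> 3 * (1 + 4 * x) \<le> 16 * y" for x y :: real by (simp add: algebra_simps)
    show ?thesis using g[OF h n1] by (simp add: power2_eq_square)
  qed
  finally have K: "exp 1 * (1 + 4 * real n) \<le> 16 * (real n)\<^sup>2" .
  have d4: "\<delta> ^ 4 \<le> \<delta>" using d by (simp add: power_le_one power4_eq_xxxx mult_le_one)
  have "exp 1 * (1 + 4 * real n) / \<delta> \<le> 16 * (real n)\<^sup>2 / \<delta>"
    using K d by (simp add: divide_right_mono)
  also have "\<dots> \<le> 16 * (real n)\<^sup>2 / \<delta> ^ 4"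
    using d d4 n1 by (intro divide_left_mono) auto
  also have "\<dots> = (2 * sqrt (real n) / \<delta>) ^ 4"
    by (simp add: power_divide power_mult_distrib) (simp add: power4_eq_xxxx power2_eq_square)
  finally have le: "exp 1 * (1 + 4 * real n) / \<delta> \<le> (2 * sqrt (real n) / \<delta>) ^ 4" .
  have pos: "0 < exp 1 * (1 + 4 * real n) / \<delta>" using d by simp
  have "ln (exp 1 * (1 + 4 * real n) / \<delta>) \<le> ln ((2 * sqrt (real n) / \<delta>) ^ 4)"
    using le pos by (metis ln_le_cancel_iff less_le_trans)
  also have "\<dots> = 4 * ln (2 * sqrt (real n) / \<delta>)"
    using n d by (subst ln_realpow) auto
  finally show ?thesis .
qed

lemma kl_term_nonneg:
  fixes s v :: real
  assumes "s > 0" "v > 0"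
  shows "0 \<le> s / v + ln (v / s) - 1"
proof -
  have "ln (s / v) \<le> s / v - 1" using assms by (intro ln_le_minus_one) auto
  moreover have "ln (v / s) = - ln (s / v)" using assms by (simp add: ln_div)
  ultimately show ?thesis by simp
qed



lemma sq_integral_le:
  fixes f :: "'a \<Rightarrow> real"
  assumes M: "prob_space M" and fi: "integrable M f" and f2: "integrable M (\<lambda>x. (f x)\<^sup>2)"
  shows "(\<integral>x. f x \<partial>M)\<^sup>2 \<le> (\<integral>x. (f x)\<^sup>2 \<partial>M)"
proof -
  interpret prob_space M by (rule M)
  define c where "c = (\<integral>x. f x \<partial>M)"
  have "0 \<le> (\<integral>x. (f x - c)\<^sup>2 \<partial>M)" by (intro Bochner_Integration.integral_nonneg_AE AE_I2) simp
  also have "(\<lambda>x. (f x - c)\<^sup>2) = (\<lambda>x. (f x)\<^sup>2 - 2 * c * f x + c\<^sup>2)"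
    by (auto simp: power2_eq_square algebra_simps)
  also have "(\<integral>x. (f x)\<^sup>2 - 2 * c * f x + c\<^sup>2 \<partial>M) = (\<integral>x. (f x)\<^sup>2 \<partial>M) - 2 * c * c + c\<^sup>2"
    using fi f2 by (simp add: c_def prob_space)
  finally show ?thesis by (simp add: c_def power2_eq_square)
qed

theorem theorem3:
  fixes D :: "(real^'d) measure"
    and X :: "(real^'d) set"
    and l :: "real^'p \<Rightarrow> real^'q \<Rightarrow> real^'d \<Rightarrow> real"
    and n :: nat
    and \<delta> :: real
    and phi0 :: "real^'p" and theta0 :: "real^'q"
    and vphi vtheta :: real
  assumes "prob_space D"
    and "space D = X"
    and "sets D = sets (restrict_space borel X)"
    and "(\<lambda>(phi, theta, x). l phi theta x) \<in> borel_measurable (borel \<Otimes>\<^sub>M borel \<Otimes>\<^sub>M D)"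
    and "\<And>phi theta x. x \<in> X \<Longrightarrow> 0 \<le> l phi theta x \<and> l phi theta x \<le> 1"
    and "n > 0"
    and "0 < \<delta>" and "\<delta> < 1"
    and "vphi > 0" and "vtheta > 0"
  shows "\<exists>E \<in> sets (PiM {..<n} (\<lambda>_. D)).
           measure (PiM {..<n} (\<lambda>_. D)) E \<le> \<delta> \<and>
           (\<forall>S \<in> space (PiM {..<n} (\<lambda>_. D)) - E.
             \<forall>phi theta sphi stheta. sphi > 0 \<longrightarrow> stheta > 0 \<longrightarrow>
               (\<integral>w. pop_risk D l (fst w) (snd w) \<partial>(iso_gauss phi sphi \<Otimes>\<^sub>M iso_gauss theta stheta))
               \<le> (\<integral>w. emp_risk n S l (fst w) (snd w) \<partial>(iso_gauss phi sphi \<Otimes>\<^sub>M iso_gauss theta stheta))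
                 + sqrt ((norm (phi - phi0))\<^sup>2 / (4 * vphi * real n)
                         + real CARD('p) * (sphi / vphi + ln (vphi / sphi) - 1) / (4 * real n)
                         + ln (2 * sqrt (real n) / \<delta>) / (2 * real n))
                 + sqrt ((norm (theta - theta0))\<^sup>2 / (4 * vtheta * real n)
                         + real CARD('q) * (stheta / vtheta + ln (vtheta / stheta) - 1) / (4 * real n)
                         + ln (2 * sqrt (real n) / \<delta>) / (2 * real n)))"
proof -
  note Dp = assms(1) and spD = assms(2) and lmeas = assms(4) and l01 = assms(5)
  note n = assms(6) and d0 = assms(7) and d1 = assms(8) and vphi = assms(9) and vtheta = assms(10)
  interpret D: prob_space D by (rule Dp)
  let ?M = "PiM {..<n} (\<lambda>_. D)"
  interpret M: prob_space ?M by (intro prob_space_PiM Dp)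
  let ?B = "borel \<Otimes>\<^sub>M borel :: ((real^'p) \<times> (real^'q)) measure"
  define P where "P = iso_gauss phi0 vphi \<Otimes>\<^sub>M iso_gauss theta0 vtheta"
  have Pp: "prob_space P" unfolding P_def
    by (intro prob_space_pair prob_space_iso_gauss vphi vtheta)
  interpret P: prob_space P by (rule Pp)
  have setsP: "sets P = sets ?B" unfolding P_def by (intro sets_pair_measure_cong) auto
  have lm[measurable]: "(\<lambda>(w, x). l (fst w) (snd w) x) \<in> borel_measurable (?B \<Otimes>\<^sub>M D)"
  proof -
    have "(\<lambda>(w, x). (fst w, snd w, x)) \<in> measurable (?B \<Otimes>\<^sub>M D) (borel \<Otimes>\<^sub>M borel \<Otimes>\<^sub>M D)"
      by measurable
    from measurable_compose[OF this lmeas] show ?thesis by (simp add: case_prod_beta')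
  qed
  have lx[measurable]: "(\<lambda>x. l a b x) \<in> borel_measurable D" for a b
  proof -
    have "(\<lambda>x. (a, b, x)) \<in> measurable D (borel \<Otimes>\<^sub>M borel \<Otimes>\<^sub>M D)" by measurable
    from measurable_compose[OF this lmeas] show ?thesis by simp
  qed
  have lw[measurable]: "(\<lambda>w. l (fst w) (snd w) x) \<in> borel_measurable ?B" if "x \<in> space D" for x
  proof -
    have "(\<lambda>w. (w, x)) \<in> measurable ?B (?B \<Otimes>\<^sub>M D)" using that by measurable
    from measurable_compose[OF this lm] show ?thesis by simp
  qed
  define R where "R w = pop_risk D l (fst w) (snd w)" for w
  define Rh where "Rh S w = emp_risk n S l (fst w) (snd w)" for S w
  define F where "F S w = 2 * real n * (R w - Rh S w)\<^sup>2" for S w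
  define K where "K = exp 1 * (1 + 4 * real n)"
  have K0: "K > 0" unfolding K_def by simp
  have Rm[measurable]: "R \<in> borel_measurable ?B"
    unfolding R_def pop_risk_def
    by (rule D.borel_measurable_lebesgue_integral[where f="\<lambda>w x. l (fst w) (snd w) x"]) (use lm in simp)
  have Shm[measurable]: "(\<lambda>(S, w). l (fst w) (snd w) (S i)) \<in> borel_measurable (?M \<Otimes>\<^sub>M ?B)" if "i < n" for i
  proof -
    have ci[measurable]: "(\<lambda>S. S i) \<in> measurable ?M D"
      using that by (intro measurable_component_singleton) auto
    have "(\<lambda>(S, w). (w, S i)) \<in> measurable (?M \<Otimes>\<^sub>M ?B) (?B \<Otimes>\<^sub>M D)"
      by measurable
    from measurable_compose[OF this lm] show ?thesis by (simp add: case_prod_beta')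
  qed
  have Fm2: "(\<lambda>(S, w). F S w) \<in> borel_measurable (?M \<Otimes>\<^sub>M ?B)"
  proof -
    have h1: "(\<lambda>p. \<Sum>i<n. (\<lambda>(S, w). l (fst w) (snd w) (S i)) p) \<in> borel_measurable (?M \<Otimes>\<^sub>M ?B)"
      by (rule borel_measurable_sum) (rule Shm, simp)
    have h2: "(\<lambda>p. R (snd p)) \<in> borel_measurable (?M \<Otimes>\<^sub>M ?B)"
      using measurable_compose[OF measurable_snd Rm] by (simp add: comp_def)
    have "(\<lambda>p. 2 * real n * (R (snd p) - (\<Sum>i<n. (\<lambda>(S, w). l (fst w) (snd w) (S i)) p) / real n)\<^sup>2)
        \<in> borel_measurable (?M \<Otimes>\<^sub>M ?B)"
      by (intro borel_measurable_times borel_measurable_power borel_measurable_diff borel_measurable_divide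
          borel_measurable_const h1 h2)
    moreover have "(\<lambda>p. 2 * real n * (R (snd p) - (\<Sum>i<n. (\<lambda>(S, w). l (fst w) (snd w) (S i)) p) / real n)\<^sup>2)
        = (\<lambda>(S, w). F S w)"
      by (auto simp: fun_eq_iff F_def Rh_def emp_risk_def case_prod_beta')
    ultimately show ?thesis by simp
  qed
  define Z where "Z S = (\<integral>\<^sup>+w. ennreal (exp (F S w)) \<partial>P)" for S
  have FmP: "(\<lambda>(S, w). ennreal (exp (F S w))) \<in> borel_measurable (?M \<Otimes>\<^sub>M P)"
  proof -
    have "sets (?M \<Otimes>\<^sub>M P) = sets (?M \<Otimes>\<^sub>M ?B)" by (intro sets_pair_measure_cong refl setsP)
    then have eq: "borel_measurable (?M \<Otimes>\<^sub>M P) = borel_measurable (?M \<Otimes>\<^sub>M ?B)"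
      by (intro measurable_cong_sets refl)
    have "(\<lambda>p. ennreal (exp ((\<lambda>(S, w). F S w) p))) \<in> borel_measurable (?M \<Otimes>\<^sub>M ?B)"
      using Fm2 by measurable
    then have X: "(\<lambda>(S, w). ennreal (exp (F S w))) \<in> borel_measurable (?M \<Otimes>\<^sub>M ?B)"
      by (simp add: case_prod_beta')
    show ?thesis unfolding eq by (rule X)
  qed
  have Zm[measurable]: "Z \<in> borel_measurable ?M"
    unfolding Z_def by (rule P.borel_measurable_nn_integral[where f="\<lambda>S w. ennreal (exp (F S w))"]) (use FmP in simp)
  have Fw: "(\<integral>\<^sup>+S. ennreal (exp (F S w)) \<partial>?M) \<le> ennreal K" for w
  proof -
    have f01: "\<And>x. x \<in> space D \<Longrightarrow> 0 \<le> l (fst w) (snd w) x \<and> l (fst w) (snd w) x \<le> 1"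
      using l01 spD by auto
    have "F S w = 2 * real n * ((\<integral>x. l (fst w) (snd w) x \<partial>D) - (\<Sum>i<n. l (fst w) (snd w) (S i)) / real n)\<^sup>2" for S
      by (simp add: F_def R_def Rh_def pop_risk_def emp_risk_def)
    then show ?thesis
      using exp_moment_sample[OF Dp lx[of "fst w" "snd w"] f01 n] by (simp add: K_def)
  qed
  interpret PS: pair_sigma_finite ?M P by unfold_locales
  have Zint: "(\<integral>\<^sup>+S. Z S \<partial>?M) \<le> ennreal K"
  proof -
    have "(\<integral>\<^sup>+S. Z S \<partial>?M) = (\<integral>\<^sup>+w. (\<integral>\<^sup>+S. ennreal (exp (F S w)) \<partial>?M) \<partial>P)"
      unfolding Z_def using PS.Fubini'[OF FmP] by simp
    also have "\<dots> \<le> (\<integral>\<^sup>+w. ennreal K \<partial>P)"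
      by (rule nn_integral_mono) (rule Fw)
    also have "\<dots> = ennreal K" by (simp add: P.emeasure_space_1)
    finally show ?thesis .
  qed
  define E where "E = {S \<in> space ?M. ennreal (K / \<delta>) < Z S}"
  have Esets: "E \<in> sets ?M" unfolding E_def by measurable
  have Emeas: "measure ?M E \<le> \<delta>"
  proof -
    have "ennreal (K / \<delta>) * emeasure ?M E = (\<integral>\<^sup>+S. ennreal (K / \<delta>) * indicator E S \<partial>?M)"
      using Esets by (simp add: nn_integral_cmult_indicator)
    also have "\<dots> \<le> (\<integral>\<^sup>+S. Z S \<partial>?M)"
      by (rule nn_integral_mono) (auto simp: E_def indicator_def less_imp_le)
    also have "\<dots> \<le> ennreal K" by (rule Zint)
    finally have h: "ennreal (K / \<delta>) * ennreal (measure ?M E) \<le> ennreal K"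
      by (simp add: M.emeasure_eq_measure)
    have eq: "ennreal (K / \<delta> * measure ?M E) = ennreal (K / \<delta>) * ennreal (measure ?M E)"
      by (rule ennreal_mult'') simp
    have "ennreal (K / \<delta> * measure ?M E) \<le> ennreal K" unfolding eq by (rule h)
    then have "K / \<delta> * measure ?M E \<le> K" using K0 by (subst (asm) ennreal_le_iff) auto
    then have "K * measure ?M E \<le> K * \<delta>" using d0 by (simp add: field_simps)
    then show ?thesis using K0 by simp
  qed
  have main: "(\<integral>w. R w \<partial>(iso_gauss phi sphi \<Otimes>\<^sub>M iso_gauss theta stheta))
               \<le> (\<integral>w. Rh S w \<partial>(iso_gauss phi sphi \<Otimes>\<^sub>M iso_gauss theta stheta))
                 + sqrt ((norm (phi - phi0))\<^sup>2 / (4 * vphi * real n)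
                         + real CARD('p) * (sphi / vphi + ln (vphi / sphi) - 1) / (4 * real n)
                         + ln (2 * sqrt (real n) / \<delta>) / (2 * real n))
                 + sqrt ((norm (theta - theta0))\<^sup>2 / (4 * vtheta * real n)
                         + real CARD('q) * (stheta / vtheta + ln (vtheta / stheta) - 1) / (4 * real n)
                         + ln (2 * sqrt (real n) / \<delta>) / (2 * real n))"
    if S: "S \<in> space ?M - E" and sp: "0 < sphi" and st: "0 < stheta" for S phi theta sphi stheta
  proof -
    have SM: "S \<in> space ?M" and ZS: "Z S \<le> ennreal (K / \<delta>)"
      using S by (auto simp: E_def not_less)
    have SX: "S i \<in> X" if "i < n" for i
      using SM that spD by (auto simp: space_PiM PiE_def Pi_def)
    let ?G1 = "iso_gauss phi sphi" and ?G2 = "iso_gauss theta stheta"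
    let ?Q = "?G1 \<Otimes>\<^sub>M ?G2"
    interpret G1: prob_space ?G1 by (rule prob_space_iso_gauss[OF sp])
    interpret G2: prob_space ?G2 by (rule prob_space_iso_gauss[OF st])
    have Qp: "prob_space ?Q" by (intro prob_space_pair G1.prob_space_axioms G2.prob_space_axioms)
    interpret Q: prob_space ?Q by (rule Qp)
    have setsQ: "sets ?Q = sets ?B" by (intro sets_pair_measure_cong) auto
    have mQ: "borel_measurable ?Q = borel_measurable ?B" by (intro measurable_cong_sets setsQ refl)
    define L1 where "L1 = lratio phi sphi phi0 vphi"
    define L2 where "L2 = lratio theta stheta theta0 vtheta"
    define L where "L w = L1 (fst w) + L2 (snd w)" for w
    have L1m[measurable]: "L1 \<in> borel_measurable borel" unfolding L1_def lratio_def[abs_def] by measurable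
    have L2m[measurable]: "L2 \<in> borel_measurable borel" unfolding L2_def lratio_def[abs_def] by measurable
    have L1G: "L1 \<in> borel_measurable ?G1"
      using L1m measurable_cong_sets[of ?G1 borel borel borel] by simp
    have L2G: "L2 \<in> borel_measurable ?G2"
      using L2m measurable_cong_sets[of ?G2 borel borel borel] by simp
    have Lm: "L \<in> borel_measurable ?Q" unfolding mQ L_def by measurable
    have r1: "ennreal (gdens phi0 vphi x / gdens phi sphi x) = ennreal (exp (- L1 x))" for x
    proof -
      have "exp (- L1 x) = exp (ln (gdens phi0 vphi x)) / exp (ln (gdens phi sphi x))"
        unfolding L1_def lratio_def by (simp add: exp_diff[symmetric])
      then show ?thesis using gdens_pos[OF sp, of phi x] gdens_pos[OF vphi, of phi0 x] by simp
    qed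
    have r2: "ennreal (gdens theta0 vtheta x / gdens theta stheta x) = ennreal (exp (- L2 x))" for x
    proof -
      have "exp (- L2 x) = exp (ln (gdens theta0 vtheta x)) / exp (ln (gdens theta stheta x))"
        unfolding L2_def lratio_def by (simp add: exp_diff[symmetric])
      then show ?thesis using gdens_pos[OF st, of theta x] gdens_pos[OF vtheta, of theta0 x] by simp
    qed
    have PQ: "P = density ?Q (\<lambda>w. ennreal (exp (- L w)))"
    proof -
      have "P = density ?G1 (\<lambda>x. ennreal (exp (- L1 x))) \<Otimes>\<^sub>M density ?G2 (\<lambda>x. ennreal (exp (- L2 x)))"
        unfolding P_def iso_gauss_change[OF sp vphi, of phi0 phi] iso_gauss_change[OF st vtheta, of theta0 theta] r1 r2 ..
      also have "\<dots> = density ?Q (\<lambda>(x, y). ennreal (exp (- L1 x)) * ennreal (exp (- L2 y)))"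
      proof (rule pair_measure_density)
        show "(\<lambda>x. ennreal (exp (- L1 x))) \<in> borel_measurable ?G1" by simp
        show "(\<lambda>x. ennreal (exp (- L2 x))) \<in> borel_measurable ?G2" by simp
        show "sigma_finite_measure ?G2" by unfold_locales
        have "density ?G2 (\<lambda>x. ennreal (exp (- L2 x))) = iso_gauss theta0 vtheta"
          unfolding iso_gauss_change[OF st vtheta, of theta0 theta] r2 ..
        then show "sigma_finite_measure (density ?G2 (\<lambda>x. ennreal (exp (- L2 x))))"
          using prob_space_imp_sigma_finite[OF prob_space_iso_gauss[OF vtheta, of theta0]] by simp
      qed
      also have "\<dots> = density ?Q (\<lambda>w. ennreal (exp (- L w)))"
        by (intro density_cong) (auto simp: L_def ennreal_mult[symmetric] exp_add[symmetric] exp_diff)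
      finally show ?thesis .
    qed
    have R01: "0 \<le> R w \<and> R w \<le> 1" for w
    proof -
      have b: "0 \<le> l (fst w) (snd w) x \<and> l (fst w) (snd w) x \<le> 1" if "x \<in> space D" for x
        using l01 spD that by auto
      have "integrable D (\<lambda>x. l (fst w) (snd w) x)"
        by (rule D.integrable_const_bound[where B=1]) (use b in auto)
      then show ?thesis unfolding R_def pop_risk_def
        using b by (auto intro!: integral_nonneg_AE D.integral_le_const AE_I2)
    qed
    have Rh01: "0 \<le> Rh S w \<and> Rh S w \<le> 1" for w
    proof -
      have b: "0 \<le> l (fst w) (snd w) (S i) \<and> l (fst w) (snd w) (S i) \<le> 1" if "i < n" for i
        using l01 SX[OF that] by auto
      have "(\<Sum>i<n. l (fst w) (snd w) (S i)) \<le> (\<Sum>i<n. 1)" using b by (intro sum_mono) auto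
      then show ?thesis unfolding Rh_def emp_risk_def
        using b n by (auto intro!: sum_nonneg divide_nonneg_nonneg)
    qed
    have FSm: "F S \<in> borel_measurable ?Q"
      unfolding mQ using measurable_Pair2[OF Fm2 SM] by simp
    have F0: "0 \<le> F S w" for w unfolding F_def by simp
    have FB: "F S w \<le> 2 * real n" for w
    proof -
      have "\<bar>R w - Rh S w\<bar> \<le> 1" using R01[of w] Rh01[of w] by linarith
      then have "(R w - Rh S w)\<^sup>2 \<le> 1" by (metis abs_le_square_iff abs_one one_power2)
      then have "real n * (R w - Rh S w)\<^sup>2 \<le> real n * 1" by (intro mult_left_mono) auto
      then show ?thesis unfolding F_def by simp
    qed
    have dfst: "distr ?Q ?G1 fst = ?G1" by (rule G2.distr_pair_fst)
    have dsnd: "distr ?Q ?G2 snd = ?G2"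
      by (rule distr_pair_snd_prob[OF G1.prob_space_axioms G2.prob_space_axioms])
    have i1: "integrable ?Q (\<lambda>w. L1 (fst w))"
      using integrable_distr_eq[of fst ?Q ?G1 L1] dfst lratio_integral(1)[OF sp vphi, of phi phi0]
      by (simp add: L1_def)
    have i2: "integrable ?Q (\<lambda>w. L2 (snd w))"
      using integrable_distr_eq[of snd ?Q ?G2 L2] dsnd lratio_integral(1)[OF st vtheta, of theta theta0]
      by (simp add: L2_def)
    have Li: "integrable ?Q L" unfolding L_def using i1 i2 by simp
    define KL1 where "KL1 = (norm (phi - phi0))\<^sup>2 / (2 * vphi) + real CARD('p) * (sphi / vphi + ln (vphi / sphi) - 1) / 2"
    define KL2 where "KL2 = (norm (theta - theta0))\<^sup>2 / (2 * vtheta) + real CARD('q) * (stheta / vtheta + ln (vtheta / stheta) - 1) / 2"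
    have I1: "(\<integral>w. L1 (fst w) \<partial>?Q) = KL1"
      using integral_distr[of fst ?Q ?G1 L1] dfst lratio_integral(2)[OF sp vphi, of phi phi0] L1G
      by (simp add: L1_def KL1_def)
    have I2: "(\<integral>w. L2 (snd w) \<partial>?Q) = KL2"
      using integral_distr[of snd ?Q ?G2 L2] dsnd lratio_integral(2)[OF st vtheta, of theta theta0] L2G
      by (simp add: L2_def KL2_def)
    have IL: "(\<integral>w. L w \<partial>?Q) = KL1 + KL2" unfolding L_def using i1 i2 I1 I2 by simp
    have C: "(\<integral>\<^sup>+w. ennreal (exp (- L w)) * ennreal (exp (F S w)) \<partial>?Q) \<le> ennreal (K / \<delta>)"
    proof -
      have "Z S = (\<integral>\<^sup>+w. ennreal (exp (- L w)) * ennreal (exp (F S w)) \<partial>?Q)"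
        unfolding Z_def PQ using Lm FSm by (subst nn_integral_density) auto
      then show ?thesis using ZS by simp
    qed
    have DV: "(\<integral>w. F S w \<partial>?Q) \<le> KL1 + KL2 + ln (K / \<delta>)"
      using DV_bound[OF Qp FSm F0 FB Li C] IL by simp
    define Dl where "Dl w = R w - Rh S w" for w
    have Dlm: "Dl \<in> borel_measurable ?Q"
    proof -
      have "(\<lambda>w. F S w / (2 * real n)) \<in> borel_measurable ?Q" using FSm by measurable
      have "Rh S \<in> borel_measurable ?B"
      proof -
        have "(\<lambda>w. (\<Sum>i<n. l (fst w) (snd w) (S i)) / real n) \<in> borel_measurable ?B"
          using SX spD by (intro borel_measurable_divide borel_measurable_sum borel_measurable_const lw) auto
        moreover have "Rh S = (\<lambda>w. (\<Sum>i<n. l (fst w) (snd w) (S i)) / real n)"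
          by (rule ext) (simp add: Rh_def emp_risk_def)
        ultimately show ?thesis by simp
      qed
      then show ?thesis unfolding mQ Dl_def by measurable
    qed
    have Dlb: "\<bar>Dl w\<bar> \<le> 1" for w using R01[of w] Rh01[of w] unfolding Dl_def by linarith
    have Dli: "integrable ?Q Dl"
      by (rule Q.integrable_const_bound[where B=1]) (use Dlb Dlm in auto)
    have Dl2i: "integrable ?Q (\<lambda>w. (Dl w)\<^sup>2)"
    proof (rule Q.integrable_const_bound[where B=1])
      show "AE w in ?Q. norm ((Dl w)\<^sup>2) \<le> 1"
        using Dlb by (intro AE_I2) (simp add: abs_le_square_iff[symmetric] abs_square_le_1)
      show "(\<lambda>w. (Dl w)\<^sup>2) \<in> borel_measurable ?Q" using Dlm by measurable
    qed
    have FD: "(\<integral>w. F S w \<partial>?Q) = 2 * real n * (\<integral>w. (Dl w)\<^sup>2 \<partial>?Q)"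
      unfolding F_def Dl_def by simp
    have sq: "(\<integral>w. Dl w \<partial>?Q)\<^sup>2 \<le> (\<integral>w. (Dl w)\<^sup>2 \<partial>?Q)"
      by (rule sq_integral_le[OF Qp Dli Dl2i])
    define a where "a = KL1 / (2 * real n)"
    define b where "b = KL2 / (2 * real n)"
    define c where "c = ln (2 * sqrt (real n) / \<delta>) / (2 * real n)"
    have n0: "real n > 0" using n by simp
    have "2 * real n * (\<integral>w. Dl w \<partial>?Q)\<^sup>2 \<le> 2 * real n * (\<integral>w. (Dl w)\<^sup>2 \<partial>?Q)"
      using sq n0 by (intro mult_left_mono) auto
    also have "\<dots> = (\<integral>w. F S w \<partial>?Q)" using FD by simp
    also have "\<dots> \<le> KL1 + KL2 + ln (K / \<delta>)" by (rule DV)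
    finally have h2: "(\<integral>w. Dl w \<partial>?Q)\<^sup>2 * (2 * real n) \<le> KL1 + KL2 + ln (K / \<delta>)"
      by (simp add: mult.commute)
    have "(\<integral>w. Dl w \<partial>?Q)\<^sup>2 \<le> (KL1 + KL2 + ln (K / \<delta>)) / (2 * real n)"
      using h2 n0 by (subst pos_le_divide_eq) auto
    also have "\<dots> \<le> a + b + 4 * c"
    proof -
      have "ln (K / \<delta>) \<le> 4 * ln (2 * sqrt (real n) / \<delta>)"
        unfolding K_def by (rule ln_K_bound[OF n d0 d1])
      then have "ln (K / \<delta>) / (2 * real n) \<le> 4 * ln (2 * sqrt (real n) / \<delta>) / (2 * real n)"
        using n0 by (intro divide_right_mono) auto
      then show ?thesis unfolding a_def b_def c_def by (simp add: add_divide_distrib)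
    qed
    finally have sqb: "(\<integral>w. Dl w \<partial>?Q)\<^sup>2 \<le> a + b + 4 * c" .
    have a0: "0 \<le> a" unfolding a_def KL1_def using kl_term_nonneg[OF sp vphi] vphi n0 by simp
    have b0: "0 \<le> b" unfolding b_def KL2_def using kl_term_nonneg[OF st vtheta] vtheta n0 by simp
    have c0: "0 \<le> c"
    proof -
      have s1: "1 \<le> sqrt (real n)" using n by simp
      have "\<delta> \<le> 2 * sqrt (real n)" using s1 d1 by linarith
      then have "1 \<le> 2 * sqrt (real n) / \<delta>" using d0 by (simp add: field_simps)
      then show ?thesis unfolding c_def using n0 by simp
    qed
    have "(\<integral>w. Dl w \<partial>?Q) \<le> sqrt (a + c) + sqrt (b + c)"
      by (rule sqrt_sum_bound[OF sqb a0 b0 c0])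
    moreover have "(\<integral>w. Dl w \<partial>?Q) = (\<integral>w. R w \<partial>?Q) - (\<integral>w. Rh S w \<partial>?Q)"
    proof -
      have Ri: "integrable ?Q R"
        by (rule Q.integrable_const_bound[where B=1]) (use R01 in \<open>auto simp: mQ\<close>)
      have "integrable ?Q (Rh S)"
      proof -
        have "(\<lambda>w. R w - Dl w) = Rh S" by (auto simp: Dl_def)
        then show ?thesis using Ri Dli by (metis Bochner_Integration.integrable_diff)
      qed
      then show ?thesis unfolding Dl_def using Ri by simp
    qed
    moreover have "a + c = (norm (phi - phi0))\<^sup>2 / (4 * vphi * real n)
                         + real CARD('p) * (sphi / vphi + ln (vphi / sphi) - 1) / (4 * real n)
                         + ln (2 * sqrt (real n) / \<delta>) / (2 * real n)"
      unfolding a_def c_def KL1_def using n0 vphi by (simp add: field_simps)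
    moreover have "b + c = (norm (theta - theta0))\<^sup>2 / (4 * vtheta * real n)
                         + real CARD('q) * (stheta / vtheta + ln (vtheta / stheta) - 1) / (4 * real n)
                         + ln (2 * sqrt (real n) / \<delta>) / (2 * real n)"
      unfolding b_def c_def KL2_def using n0 vtheta by (simp add: field_simps)
    ultimately show ?thesis by simp
  qed
  show ?thesis
  proof (rule bexI[OF _ Esets], intro conjI ballI allI impI)
    show "measure ?M E \<le> \<delta>" by (rule Emeas)
    fix S phi theta sphi stheta
    assume "S \<in> space ?M - E" "0 < (sphi::real)" "0 < (stheta::real)"
    from main[OF this, of phi theta] show "(\<integral>w. pop_risk D l (fst w) (snd w) \<partial>(iso_gauss phi sphi \<Otimes>\<^sub>M iso_gauss theta stheta))
               \<le> (\<integral>w. emp_risk n S l (fst w) (snd w) \<partial>(iso_gauss phi sphi \<Otimes>\<^sub>M iso_gauss theta stheta))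
                 + sqrt ((norm (phi - phi0))\<^sup>2 / (4 * vphi * real n)
                         + real CARD('p) * (sphi / vphi + ln (vphi / sphi) - 1) / (4 * real n)
                         + ln (2 * sqrt (real n) / \<delta>) / (2 * real n))
                 + sqrt ((norm (theta - theta0))\<^sup>2 / (4 * vtheta * real n)
                         + real CARD('q) * (stheta / vtheta + ln (vtheta / stheta) - 1) / (4 * real n)
                         + ln (2 * sqrt (real n) / \<delta>) / (2 * real n))"
      by (simp add: R_def Rh_def)
  qed
qed


end
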